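(* Suppose $k=n-q+2$ and let $x,y\in G\setminus K$ with $x\ne y$. Then there is $(v,w)\in\mathrm{diff}(\circ,\ast)$ such that $\{v,w,v\circ w\}\cap\{x,y\}=\emptyset$, $v\in G\setminus K$, and $w\in K$ or $v\circ w\in K$.
   Context: $G$ is a set of size $n$ and $G(\circ)$, $G(\ast)$ are distinct groups on $G$ with the same identity element $1$, and $\mathrm{dist}_1=0$. $\mathrm{diff}(\circ,\ast)=\{(a,b):a\circ b\ne a\ast b\}$, $\mathrm{dist}_a=|\{b:a\circ b\ne a\ast b\}|$; $K=\{a:\mathrm{dist}_a<n/3\}$, $k=|K|$; $q=\lceil n/3\rceil$. *)

theory Defs
  imports Complex_Main "HOL-Algebra.Group"
begin

text \<open>Two group structures A (operation \<circ>) and B (operation \<ast>) on the same carrier.\<close>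

definition diff_set :: "('a, 'm) monoid_scheme \<Rightarrow> ('a, 'n) monoid_scheme \<Rightarrow> ('a \<times> 'a) set" where
  "diff_set A B = {(a, b). a \<in> carrier A \<and> b \<in> carrier A \<and> a \<otimes>\<^bsub>A\<^esub> b \<noteq> a \<otimes>\<^bsub>B\<^esub> b}"

definition dist_el :: "('a, 'm) monoid_scheme \<Rightarrow> ('a, 'n) monoid_scheme \<Rightarrow> 'a \<Rightarrow> nat" where
  "dist_el A B a = card {b \<in> carrier A. a \<otimes>\<^bsub>A\<^esub> b \<noteq> a \<otimes>\<^bsub>B\<^esub> b}"

definition K_set :: "('a, 'm) monoid_scheme \<Rightarrow> ('a, 'n) monoid_scheme \<Rightarrow> 'a set" where
  "K_set A B = {a \<in> carrier A. real (dist_el A B a) < real (card (carrier A)) / 3}"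

end

theory Submission
  imports Defs
begin

lemma card_pre:
  assumes "inj_on f S" "finite M"
  shows "card {c \<in> S. f c \<in> M} \<le> card M"
proof -
  have "inj_on f {c \<in> S. f c \<in> M}" using assms(1) by (rule inj_on_subset) auto
  moreover have "f ` {c \<in> S. f c \<in> M} \<subseteq> M" by auto
  ultimately show ?thesis using card_inj_on_le assms(2) by blast
qed

lemma grp_lcancel: "group G \<Longrightarrow> x \<in> carrier G \<Longrightarrow> y \<in> carrier G \<Longrightarrow> z \<in> carrier G \<Longrightarrow> (x \<otimes>\<^bsub>G\<^esub> y = x \<otimes>\<^bsub>G\<^esub> z) = (y = z)"
  by (metis group.Units_eq monoid.Units_l_cancel group.is_monoid)

lemma card_Un3: "card (X \<union> Y \<union> Z) \<le> card X + card Y + card Z"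
  using card_Un_le[of "X \<union> Y" Z] card_Un_le[of X Y] by linarith

lemma card_Un4: "card (X \<union> Y \<union> Z \<union> W) \<le> card X + card Y + card Z + card W"
  using card_Un_le[of "X \<union> Y \<union> Z" W] card_Un3[of X Y Z] by linarith

lemma card_Un6: "card (X \<union> Y \<union> Z \<union> W \<union> V \<union> R) \<le> card X + card Y + card Z + card W + card V + card R"
  using card_Un_le[of "X \<union> Y \<union> Z \<union> W \<union> V" R] card_Un_le[of "X \<union> Y \<union> Z \<union> W" V] card_Un4[of X Y Z W] by linarith

locale tg =
  fixes A :: "('a, 'm) monoid_scheme" and B :: "('a, 'b) monoid_scheme"
  assumes GA: "group A" and GB: "group B" and cB: "carrier B = carrier A"
    and oB: "\<one>\<^bsub>B\<^esub> = \<one>\<^bsub>A\<^esub>" and fin: "finite (carrier A)"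
begin

definition D where "D a = {b \<in> carrier A. a \<otimes>\<^bsub>A\<^esub> b \<noteq> a \<otimes>\<^bsub>B\<^esub> b}"

lemma dist_D: "dist_el A B a = card (D a)" by (simp add: dist_el_def D_def)

lemma D_sub: "D a \<subseteq> carrier A" by (auto simp: D_def)
lemma D_fin: "finite (D a)" using D_sub fin finite_subset by blast

lemma one_notin_D: "a \<in> carrier A \<Longrightarrow> \<one>\<^bsub>A\<^esub> \<notin> D a"
proof -
  interpret A: group A by (rule GA)
  interpret B: group B by (rule GB)
  assume a: "a \<in> carrier A"
  then show ?thesis using B.r_one[of a] oB cB by (auto simp: D_def)
qed

lemma ineq:
  assumes a: "a \<in> carrier A" and b: "b \<in> carrier A" and ne: "a \<otimes>\<^bsub>A\<^esub> b \<noteq> a \<otimes>\<^bsub>B\<^esub> b"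
  shows "card (carrier A) \<le> card (D a) + card (D b) + card (D (a \<otimes>\<^bsub>A\<^esub> b))"
    and "card (carrier A) \<le> card (D a) + card (D b) + card (D (a \<otimes>\<^bsub>B\<^esub> b))"
proof -
  interpret A: group A by (rule GA)
  interpret B: group B by (rule GB)
  let ?d = "a \<otimes>\<^bsub>A\<^esub> b" and ?e = "a \<otimes>\<^bsub>B\<^esub> b"
  let ?S = "{c \<in> carrier A. b \<otimes>\<^bsub>A\<^esub> c \<in> D a}"
  have injb: "inj_on (\<lambda>c. b \<otimes>\<^bsub>A\<^esub> c) (carrier A)"
    using b grp_lcancel[OF GA] by (auto simp: inj_on_def)
  have cS: "card ?S \<le> card (D a)" by (rule card_pre[OF injb D_fin])
  have d: "?d \<in> carrier A" using a b by simp
  have e: "?e \<in> carrier A" using a b cB by (metis B.m_closed)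
  have key: "c \<in> D b \<or> c \<in> ?S \<or> (c \<in> D ?d \<and> c \<in> D ?e)" if c: "c \<in> carrier A" for c
  proof (rule ccontr)
    assume "\<not> ?thesis"
    hence n1: "c \<notin> D b" and n2: "b \<otimes>\<^bsub>A\<^esub> c \<notin> D a" and n3: "c \<notin> D ?d \<or> c \<notin> D ?e"
      using c by auto
    have bc: "b \<otimes>\<^bsub>A\<^esub> c \<in> carrier A" using b c by simp
    have "?d \<otimes>\<^bsub>A\<^esub> c = a \<otimes>\<^bsub>A\<^esub> (b \<otimes>\<^bsub>A\<^esub> c)" using a b c A.m_assoc by simp
    also have "\<dots> = a \<otimes>\<^bsub>B\<^esub> (b \<otimes>\<^bsub>A\<^esub> c)" using n2 bc by (auto simp: D_def)
    also have "\<dots> = a \<otimes>\<^bsub>B\<^esub> (b \<otimes>\<^bsub>B\<^esub> c)" using n1 c by (auto simp: D_def)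
    also have "\<dots> = ?e \<otimes>\<^bsub>B\<^esub> c" using a b c cB B.m_assoc by simp
    finally have eq: "?d \<otimes>\<^bsub>A\<^esub> c = ?e \<otimes>\<^bsub>B\<^esub> c" .
    show False
    proof (cases "c \<notin> D ?d")
      case True
      hence "?d \<otimes>\<^bsub>B\<^esub> c = ?e \<otimes>\<^bsub>B\<^esub> c" using eq c by (auto simp: D_def)
      hence "?d = ?e" using B.right_cancel[of c ?d ?e] c d e cB by simp
      thus False using ne by simp
    next
      case False
      hence "c \<notin> D ?e" using n3 by simp
      hence "?d \<otimes>\<^bsub>A\<^esub> c = ?e \<otimes>\<^bsub>A\<^esub> c" using eq c by (auto simp: D_def)
      hence "?d = ?e" using A.right_cancel[of c ?d ?e] c d e by simp
      thus False using ne by simp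
    qed
  qed
  have sub1: "carrier A \<subseteq> D b \<union> ?S \<union> D ?d" using key by blast
  have sub2: "carrier A \<subseteq> D b \<union> ?S \<union> D ?e" using key by blast
  have fS: "finite ?S" using fin by simp
  have "card (carrier A) \<le> card (D b \<union> ?S \<union> D ?d)"
    using sub1 by (intro card_mono) (auto simp: D_fin fS)
  also have "\<dots> \<le> card (D b) + card ?S + card (D ?d)"
    by (meson add_le_mono card_Un_le le_trans order_refl)
  finally show "card (carrier A) \<le> card (D a) + card (D b) + card (D ?d)" using cS by linarith
  have "card (carrier A) \<le> card (D b \<union> ?S \<union> D ?e)"
    using sub2 by (intro card_mono) (auto simp: D_fin fS)
  also have "\<dots> \<le> card (D b) + card ?S + card (D ?e)"
    by (meson add_le_mono card_Un_le le_trans order_refl)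
  finally show "card (carrier A) \<le> card (D a) + card (D b) + card (D ?e)" using cS by linarith
qed


lemma part1:
  assumes U: "U \<subseteq> carrier A" and v: "v \<in> U" and x: "x \<in> U" and y: "y \<in> U"
    and vx: "v \<noteq> x" and vy: "v \<noteq> y" and big: "card U + 2 \<le> card (D v)"
  shows "\<exists>w \<in> D v. w \<notin> {x, y} \<and> v \<otimes>\<^bsub>A\<^esub> w \<notin> {x, y} \<and> (w \<notin> U \<or> v \<otimes>\<^bsub>A\<^esub> w \<notin> U)"
proof (rule ccontr)
  interpret A: group A by (rule GA)
  assume neg: "\<not> ?thesis"
  let ?T = "{w \<in> carrier A. v \<otimes>\<^bsub>A\<^esub> w \<in> U}"
  have vG: "v \<in> carrier A" using U v by auto
  have fU: "finite U" using U fin finite_subset by blast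
  have injv: "inj_on (\<lambda>c. v \<otimes>\<^bsub>A\<^esub> c) (carrier A)"
    using vG grp_lcancel[OF GA] by (auto simp: inj_on_def)
  have cT: "card ?T \<le> card U" by (rule card_pre[OF injv fU])
  have oneT: "\<one>\<^bsub>A\<^esub> \<in> ?T" using vG v by simp
  have fT: "finite ?T" using fin by simp
  have cT1: "card (?T - {\<one>\<^bsub>A\<^esub>}) = card ?T - 1" using oneT fT by simp
  have sub: "D v \<subseteq> {x, y} \<union> (?T - {\<one>\<^bsub>A\<^esub>})"
  proof
    fix w assume w: "w \<in> D v"
    have wG: "w \<in> carrier A" using w D_sub by auto
    have w1: "w \<noteq> \<one>\<^bsub>A\<^esub>" using w one_notin_D[OF vG] by auto
    have "w \<in> {x, y} \<or> v \<otimes>\<^bsub>A\<^esub> w \<in> {x, y} \<or> (w \<in> U \<and> v \<otimes>\<^bsub>A\<^esub> w \<in> U)"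
      using neg w by blast
    thus "w \<in> {x, y} \<union> (?T - {\<one>\<^bsub>A\<^esub>})" using wG w1 x y by auto
  qed
  have "card (D v) \<le> card ({x, y} \<union> (?T - {\<one>\<^bsub>A\<^esub>}))"
    using sub fT by (intro card_mono) auto
  also have "\<dots> \<le> card {x, y} + card (?T - {\<one>\<^bsub>A\<^esub>})" by (rule card_Un_le)
  also have "\<dots> \<le> 2 + (card U - 1)" using cT1 cT by (auto simp add: card_insert_if)
  finally show False using big card_gt_0_iff[of U] fU v by auto
qed


lemma part2:
  assumes xG: "x \<in> carrier A" and yG: "y \<in> carrier A" and xy: "x \<noteq> y"
    and n10: "10 \<le> card (carrier A)"
    and small: "\<And>a. a \<in> carrier A \<Longrightarrow> a \<notin> {x, y} \<Longrightarrow> card (D a) \<le> 3"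
    and bigx: "4 \<le> card (D x)"
  shows False
proof -
  interpret A: group A by (rule GA)
  interpret B: group B by (rule GB)
  define M where "M = {x, y}"
  have cM: "card M = 2" using xy by (simp add: M_def)
  have fM: "finite M" by (simp add: M_def)
  have MG: "M \<subseteq> carrier A" using xG yG by (auto simp: M_def)
  have sm: "card (D a) \<le> 3" if "a \<in> carrier A" "a \<notin> M" for a
    using small that by (auto simp: M_def)
  have BmG: "a \<otimes>\<^bsub>B\<^esub> c \<in> carrier A" if "a \<in> carrier A" "c \<in> carrier A" for a c
    using that cB B.m_closed by metis
  have Bassoc: "(a \<otimes>\<^bsub>B\<^esub> b) \<otimes>\<^bsub>B\<^esub> c = a \<otimes>\<^bsub>B\<^esub> (b \<otimes>\<^bsub>B\<^esub> c)"
    if "a \<in> carrier A" "b \<in> carrier A" "c \<in> carrier A" for a b c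
    using that cB B.m_assoc by metis
  have Brc: "(b \<otimes>\<^bsub>B\<^esub> a = c \<otimes>\<^bsub>B\<^esub> a) = (b = c)"
    if "a \<in> carrier A" "b \<in> carrier A" "c \<in> carrier A" for a b c
    using that cB B.right_cancel by metis
  have Blc: "(a \<otimes>\<^bsub>B\<^esub> b = a \<otimes>\<^bsub>B\<^esub> c) = (b = c)"
    if "a \<in> carrier A" "b \<in> carrier A" "c \<in> carrier A" for a b c
    using that cB grp_lcancel[OF GB] by metis
  have Alc: "(a \<otimes>\<^bsub>A\<^esub> b = a \<otimes>\<^bsub>A\<^esub> c) = (b = c)"
    if "a \<in> carrier A" "b \<in> carrier A" "c \<in> carrier A" for a b c
    using that grp_lcancel[OF GA] by metis
  have FA: "a \<otimes>\<^bsub>A\<^esub> c = a \<otimes>\<^bsub>B\<^esub> c"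
    if "a \<in> carrier A" "c \<in> carrier A" "a \<notin> M" "c \<notin> M" "a \<otimes>\<^bsub>A\<^esub> c \<notin> M" for a c
  proof (rule ccontr)
    assume ne: "a \<otimes>\<^bsub>A\<^esub> c \<noteq> a \<otimes>\<^bsub>B\<^esub> c"
    have "card (carrier A) \<le> card (D a) + card (D c) + card (D (a \<otimes>\<^bsub>A\<^esub> c))"
      by (rule ineq(1)[OF that(1,2) ne])
    moreover have "card (D a) \<le> 3" "card (D c) \<le> 3" "card (D (a \<otimes>\<^bsub>A\<^esub> c)) \<le> 3"
      using sm that by auto
    ultimately show False using n10 by linarith
  qed
  have FB: "a \<otimes>\<^bsub>A\<^esub> c = a \<otimes>\<^bsub>B\<^esub> c"
    if "a \<in> carrier A" "c \<in> carrier A" "a \<notin> M" "c \<notin> M" "a \<otimes>\<^bsub>B\<^esub> c \<notin> M" for a c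
  proof (rule ccontr)
    assume ne: "a \<otimes>\<^bsub>A\<^esub> c \<noteq> a \<otimes>\<^bsub>B\<^esub> c"
    have "card (carrier A) \<le> card (D a) + card (D c) + card (D (a \<otimes>\<^bsub>B\<^esub> c))"
      by (rule ineq(2)[OF that(1,2) ne])
    moreover have "card (D a) \<le> 3" "card (D c) \<le> 3" "card (D (a \<otimes>\<^bsub>B\<^esub> c)) \<le> 3"
      using sm that BmG by auto
    ultimately show False using n10 by linarith
  qed
  have preL: "card {c \<in> carrier A. g \<otimes>\<^bsub>A\<^esub> c \<in> M} \<le> 2" if "g \<in> carrier A" for g
  proof -
    have "inj_on (\<lambda>c. g \<otimes>\<^bsub>A\<^esub> c) (carrier A)" using that Alc by (auto simp: inj_on_def)
    from card_pre[OF this fM] show ?thesis using cM by simp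
  qed
  let ?i = "m_inv A"
  define gen where "gen a \<longleftrightarrow> a \<in> carrier A \<and> a \<notin> M \<and> ?i a \<otimes>\<^bsub>A\<^esub> x \<notin> M \<and> ?i a \<otimes>\<^bsub>A\<^esub> y \<notin> M
      \<and> a \<otimes>\<^bsub>A\<^esub> x \<notin> M" for a
  have exgen: "\<exists>a. gen a \<and> (?i a \<otimes>\<^bsub>A\<^esub> x) \<otimes>\<^bsub>A\<^esub> p \<notin> M" if pG: "p \<in> carrier A" for p
  proof -
    let ?S1 = "{a \<in> carrier A. ?i a \<otimes>\<^bsub>A\<^esub> x \<in> M}"
    let ?S2 = "{a \<in> carrier A. ?i a \<otimes>\<^bsub>A\<^esub> y \<in> M}"
    let ?S3 = "{a \<in> carrier A. a \<otimes>\<^bsub>A\<^esub> x \<in> M}"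
    let ?S4 = "{a \<in> carrier A. (?i a \<otimes>\<^bsub>A\<^esub> x) \<otimes>\<^bsub>A\<^esub> p \<in> M}"
    have inj1: "inj_on (\<lambda>a. ?i a \<otimes>\<^bsub>A\<^esub> g) (carrier A)" if "g \<in> carrier A" for g
    proof (rule inj_onI)
      fix a b assume a: "a \<in> carrier A" and b: "b \<in> carrier A" and e: "?i a \<otimes>\<^bsub>A\<^esub> g = ?i b \<otimes>\<^bsub>A\<^esub> g"
      hence "?i a = ?i b" using that A.right_cancel by (meson A.inv_closed)
      thus "a = b" using a b by (metis A.inv_inv)
    qed
    have inj4: "inj_on (\<lambda>a. (?i a \<otimes>\<^bsub>A\<^esub> x) \<otimes>\<^bsub>A\<^esub> p) (carrier A)"
    proof (rule inj_onI)
      fix a b assume a: "a \<in> carrier A" and b: "b \<in> carrier A" and e: "(?i a \<otimes>\<^bsub>A\<^esub> x) \<otimes>\<^bsub>A\<^esub> p = (?i b \<otimes>\<^bsub>A\<^esub> x) \<otimes>\<^bsub>A\<^esub> p"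
      hence "?i a \<otimes>\<^bsub>A\<^esub> x = ?i b \<otimes>\<^bsub>A\<^esub> x" using pG xG a b A.right_cancel by (meson A.inv_closed A.m_closed)
      hence "?i a = ?i b" using xG a b A.right_cancel by (meson A.inv_closed)
      thus "a = b" using a b by (metis A.inv_inv)
    qed
    have inj3: "inj_on (\<lambda>a. a \<otimes>\<^bsub>A\<^esub> x) (carrier A)"
      using xG A.right_cancel by (auto simp: inj_on_def)
    have c1: "card ?S1 \<le> 2" using card_pre[OF inj1[OF xG] fM] cM by simp
    have c2: "card ?S2 \<le> 2" using card_pre[OF inj1[OF yG] fM] cM by simp
    have c3: "card ?S3 \<le> 2" using card_pre[OF inj3 fM] cM by simp
    have c4: "card ?S4 \<le> 2" using card_pre[OF inj4 fM] cM by simp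
    have o1: "\<one>\<^bsub>A\<^esub> \<in> ?S1" "\<one>\<^bsub>A\<^esub> \<in> ?S2" "\<one>\<^bsub>A\<^esub> \<in> ?S3"
      using xG yG by (auto simp: M_def)
    have d1: "card (?S1 - {\<one>\<^bsub>A\<^esub>}) \<le> 1" using c1 o1 fin by (simp add: card_Diff_singleton)
    have d2: "card (?S2 - {\<one>\<^bsub>A\<^esub>}) \<le> 1" using c2 o1 fin by (simp add: card_Diff_singleton)
    have d3: "card (?S3 - {\<one>\<^bsub>A\<^esub>}) \<le> 1" using c3 o1 fin by (simp add: card_Diff_singleton)
    let ?E = "M \<union> {\<one>\<^bsub>A\<^esub>} \<union> (?S1 - {\<one>\<^bsub>A\<^esub>}) \<union> (?S2 - {\<one>\<^bsub>A\<^esub>}) \<union> (?S3 - {\<one>\<^bsub>A\<^esub>}) \<union> ?S4"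
    have "card ?E \<le> 8" using card_Un6[of M "{\<one>\<^bsub>A\<^esub>}" "?S1 - {\<one>\<^bsub>A\<^esub>}" "?S2 - {\<one>\<^bsub>A\<^esub>}" "?S3 - {\<one>\<^bsub>A\<^esub>}" ?S4]
      cM d1 d2 d3 c4 by simp
    hence "\<not> carrier A \<subseteq> ?E" using n10 card_mono[of ?E "carrier A"] fin fM by auto
    then obtain a where a: "a \<in> carrier A" "a \<notin> ?E" by blast
    thus ?thesis unfolding gen_def by auto
  qed
  have mulinv: "a \<otimes>\<^bsub>A\<^esub> (?i a \<otimes>\<^bsub>A\<^esub> g) = g" if "a \<in> carrier A" "g \<in> carrier A" for a g
    using that A.m_assoc[of a "?i a" g, symmetric] by simp
  have zM: "a \<otimes>\<^bsub>B\<^esub> (?i a \<otimes>\<^bsub>A\<^esub> x) \<in> M" if "gen a" for a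
  proof (rule ccontr)
    assume nz: "a \<otimes>\<^bsub>B\<^esub> (?i a \<otimes>\<^bsub>A\<^esub> x) \<notin> M"
    have aG: "a \<in> carrier A" using that gen_def by auto
    have "a \<otimes>\<^bsub>A\<^esub> (?i a \<otimes>\<^bsub>A\<^esub> x) = a \<otimes>\<^bsub>B\<^esub> (?i a \<otimes>\<^bsub>A\<^esub> x)"
      using FB[of a "?i a \<otimes>\<^bsub>A\<^esub> x"] that nz xG unfolding gen_def by auto
    thus False using mulinv[OF aG xG] nz by (simp add: M_def)
  qed
  have R: "x \<otimes>\<^bsub>A\<^esub> c = (a \<otimes>\<^bsub>B\<^esub> (?i a \<otimes>\<^bsub>A\<^esub> x)) \<otimes>\<^bsub>B\<^esub> c"
    if g: "gen a" and cG: "c \<in> carrier A" and cM': "c \<notin> M" and xc: "x \<otimes>\<^bsub>A\<^esub> c \<notin> M"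
      and bc: "(?i a \<otimes>\<^bsub>A\<^esub> x) \<otimes>\<^bsub>A\<^esub> c \<notin> M" for a c
  proof -
    have aG: "a \<in> carrier A" and aM: "a \<notin> M" and bM: "?i a \<otimes>\<^bsub>A\<^esub> x \<notin> M" using g gen_def by auto
    define b where "b = ?i a \<otimes>\<^bsub>A\<^esub> x"
    have bG: "b \<in> carrier A" using aG xG b_def by simp
    have ab: "a \<otimes>\<^bsub>A\<^esub> b = x" using mulinv[OF aG xG] b_def by simp
    have "x \<otimes>\<^bsub>A\<^esub> c = a \<otimes>\<^bsub>A\<^esub> (b \<otimes>\<^bsub>A\<^esub> c)" using ab aG bG cG A.m_assoc by metis
    also have "\<dots> = a \<otimes>\<^bsub>B\<^esub> (b \<otimes>\<^bsub>A\<^esub> c)"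
      using FA[of a "b \<otimes>\<^bsub>A\<^esub> c"] aG bG cG aM bc xc calculation b_def by auto
    also have "\<dots> = a \<otimes>\<^bsub>B\<^esub> (b \<otimes>\<^bsub>B\<^esub> c)"
      using FA[of b c] bG cG bM cM' bc b_def by auto
    also have "\<dots> = (a \<otimes>\<^bsub>B\<^esub> b) \<otimes>\<^bsub>B\<^esub> c" using Bassoc aG bG cG by simp
    finally show ?thesis using b_def by simp
  qed
  show False
  proof (cases "\<exists>a. gen a \<and> a \<otimes>\<^bsub>B\<^esub> (?i a \<otimes>\<^bsub>A\<^esub> x) = y")
    case True
    then obtain a where g: "gen a" and z: "a \<otimes>\<^bsub>B\<^esub> (?i a \<otimes>\<^bsub>A\<^esub> x) = y" by blast
    have aG: "a \<in> carrier A" and aM: "a \<notin> M" and bM: "?i a \<otimes>\<^bsub>A\<^esub> x \<notin> M"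
      and b'M: "?i a \<otimes>\<^bsub>A\<^esub> y \<notin> M" and axM: "a \<otimes>\<^bsub>A\<^esub> x \<notin> M" using g gen_def by auto
    define b where "b = ?i a \<otimes>\<^bsub>A\<^esub> x"
    define b' where "b' = ?i a \<otimes>\<^bsub>A\<^esub> y"
    have bG: "b \<in> carrier A" and b'G: "b' \<in> carrier A" using aG xG yG b_def b'_def by auto
    have ab: "a \<otimes>\<^bsub>A\<^esub> b = x" using mulinv[OF aG xG] b_def by simp
    have ab': "a \<otimes>\<^bsub>A\<^esub> b' = y" using mulinv[OF aG yG] b'_def by simp
    have axG: "a \<otimes>\<^bsub>A\<^esub> x \<in> carrier A" using aG xG by simp
    let ?T1 = "{c \<in> carrier A. x \<otimes>\<^bsub>A\<^esub> c \<in> M}"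
    let ?T2 = "{c \<in> carrier A. b \<otimes>\<^bsub>A\<^esub> c \<in> M}"
    let ?T3 = "{c \<in> carrier A. (a \<otimes>\<^bsub>A\<^esub> x) \<otimes>\<^bsub>A\<^esub> c \<in> M}"
    have "card (M \<union> ?T1 \<union> ?T2 \<union> ?T3) \<le> 8"
      using card_Un4[of M ?T1 ?T2 ?T3] preL[OF xG] preL[OF bG] preL[OF axG] cM by linarith
    hence "\<not> carrier A \<subseteq> M \<union> ?T1 \<union> ?T2 \<union> ?T3" using n10 card_mono[of "M \<union> ?T1 \<union> ?T2 \<union> ?T3" "carrier A"] fin fM by auto
    then obtain c where cG: "c \<in> carrier A" and cM': "c \<notin> M" and xc: "x \<otimes>\<^bsub>A\<^esub> c \<notin> M"
      and bc: "b \<otimes>\<^bsub>A\<^esub> c \<notin> M" and axc: "(a \<otimes>\<^bsub>A\<^esub> x) \<otimes>\<^bsub>A\<^esub> c \<notin> M" by blast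
    have yc: "x \<otimes>\<^bsub>A\<^esub> c = y \<otimes>\<^bsub>B\<^esub> c" using R[OF g cG cM' xc] bc z b_def by simp
    have xcG: "x \<otimes>\<^bsub>A\<^esub> c \<in> carrier A" using xG cG by simp
    have "(a \<otimes>\<^bsub>B\<^esub> y) \<otimes>\<^bsub>B\<^esub> c = a \<otimes>\<^bsub>B\<^esub> (x \<otimes>\<^bsub>A\<^esub> c)" using Bassoc aG yG cG yc by simp
    also have "\<dots> = a \<otimes>\<^bsub>A\<^esub> (x \<otimes>\<^bsub>A\<^esub> c)"
      using FA[of a "x \<otimes>\<^bsub>A\<^esub> c"] aG xcG aM xc axc A.m_assoc[of a x c] xG cG by auto
    also have "\<dots> = (a \<otimes>\<^bsub>A\<^esub> x) \<otimes>\<^bsub>A\<^esub> c" using A.m_assoc aG xG cG by simp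
    also have "\<dots> = (a \<otimes>\<^bsub>A\<^esub> x) \<otimes>\<^bsub>B\<^esub> c" using FA[of "a \<otimes>\<^bsub>A\<^esub> x" c] axG cG axM cM' axc by auto
    finally have ay: "a \<otimes>\<^bsub>B\<^esub> y = a \<otimes>\<^bsub>A\<^esub> x" using Brc[of c] cG BmG aG yG axG by blast
    have bb': "b \<noteq> b'" using ab ab' xy by auto
    have "y \<in> D a" using ay Alc[OF aG xG yG] xy yG by (auto simp: D_def)
    moreover have "x \<in> D a" using ay Blc[OF aG xG yG] xy xG by (auto simp: D_def)
    moreover have "b \<in> D a" using ab z b_def bG xy by (auto simp: D_def)
    moreover have "b' \<in> D a" using ab' z b_def b'G bG Blc[OF aG bG b'G] bb' by (auto simp: D_def)
    ultimately have sub: "{x, y, b, b'} \<subseteq> D a" by auto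
    have "card {x, y, b, b'} = 4" using xy bb' bM b'M b_def b'_def by (auto simp: M_def)
    hence "4 \<le> card (D a)" using card_mono[OF D_fin sub] by simp
    thus False using sm[OF aG aM] by simp
  next
    case False
    have zx: "a \<otimes>\<^bsub>B\<^esub> (?i a \<otimes>\<^bsub>A\<^esub> x) = x" if "gen a" for a
      using zM[OF that] False that by (auto simp: M_def)
    let ?T = "{c \<in> carrier A. x \<otimes>\<^bsub>A\<^esub> c \<in> M}"
    have sub: "D x \<subseteq> M \<union> (?T - {\<one>\<^bsub>A\<^esub>})"
    proof
      fix c assume c: "c \<in> D x"
      have cG: "c \<in> carrier A" using c D_sub by auto
      have c1: "c \<noteq> \<one>\<^bsub>A\<^esub>" using c one_notin_D[OF xG] by auto
      show "c \<in> M \<union> (?T - {\<one>\<^bsub>A\<^esub>})"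
      proof (rule ccontr)
        assume "c \<notin> M \<union> (?T - {\<one>\<^bsub>A\<^esub>})"
        hence cM': "c \<notin> M" and xc: "x \<otimes>\<^bsub>A\<^esub> c \<notin> M" using cG c1 by auto
        obtain a where g: "gen a" and bc: "(?i a \<otimes>\<^bsub>A\<^esub> x) \<otimes>\<^bsub>A\<^esub> c \<notin> M" using exgen[OF cG] by blast
        have "x \<otimes>\<^bsub>A\<^esub> c = x \<otimes>\<^bsub>B\<^esub> c" using R[OF g cG cM' xc bc] zx[OF g] by simp
        thus False using c by (auto simp: D_def)
      qed
    qed
    have oT: "\<one>\<^bsub>A\<^esub> \<in> ?T" using xG by (simp add: M_def)
    have "card (?T - {\<one>\<^bsub>A\<^esub>}) \<le> 1" using preL[OF xG] oT fin by (simp add: card_Diff_singleton)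
    moreover have "card (D x) \<le> card M + card (?T - {\<one>\<^bsub>A\<^esub>})"
    proof -
      have "finite (M \<union> (?T - {\<one>\<^bsub>A\<^esub>}))" using fM fin by simp
      hence "card (D x) \<le> card (M \<union> (?T - {\<one>\<^bsub>A\<^esub>}))" using sub by (rule card_mono)
      thus ?thesis using card_Un_le[of M "?T - {\<one>\<^bsub>A\<^esub>}"] by linarith
    qed
    ultimately show False using bigx cM by linarith
  qed
qed

end

theorem lemma10p7:
  fixes A :: "('a, 'm) monoid_scheme" and B :: "('a, 'n) monoid_scheme"
    and n :: nat and q :: int and x y :: 'a
  assumes "group A" and "group B"
    and "finite (carrier A)" and "card (carrier A) = n"
    and "carrier B = carrier A"
    and "\<one>\<^bsub>B\<^esub> = \<one>\<^bsub>A\<^esub>"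
    and "\<exists>a \<in> carrier A. \<exists>b \<in> carrier A. a \<otimes>\<^bsub>A\<^esub> b \<noteq> a \<otimes>\<^bsub>B\<^esub> b"
    and "q = \<lceil>real n / 3\<rceil>"
    and "int (card (K_set A B)) = int n - q + 2"
    and "x \<in> carrier A - K_set A B" and "y \<in> carrier A - K_set A B" and "x \<noteq> y"
  shows "\<exists>(v, w) \<in> diff_set A B.
           {v, w, v \<otimes>\<^bsub>A\<^esub> w} \<inter> {x, y} = {}
         \<and> v \<in> carrier A - K_set A B
         \<and> (w \<in> K_set A B \<or> v \<otimes>\<^bsub>A\<^esub> w \<in> K_set A B)"
proof -
  have tgAB: "tg A B" unfolding tg_def using assms(1,2,3,5,6) by blast
  interpret T: tg A B by (rule tgAB)
  interpret A: group A by (rule assms(1))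
  let ?K = "K_set A B"
  let ?U = "carrier A - ?K"
  have KG: "?K \<subseteq> carrier A" by (auto simp: K_set_def)
  have finK: "finite ?K" using KG assms(3) finite_subset by blast
  have cU: "card ?U = n - card ?K" using card_Diff_subset[OF finK KG] assms(4) by simp
  have Kle: "card ?K \<le> n" using card_mono[OF assms(3) KG] assms(4) by simp
  have cUq: "int (card ?U) = q - 2" using cU Kle assms(9) by linarith
  have Kchar: "a \<in> ?K \<longleftrightarrow> a \<in> carrier A \<and> real (card (T.D a)) < real n / 3" for a
    by (simp add: K_set_def T.dist_D assms(4))
  show ?thesis
  proof (cases "\<exists>v \<in> ?U. v \<noteq> x \<and> v \<noteq> y")
    case True
    then obtain v where vU: "v \<in> ?U" and vx: "v \<noteq> x" and vy: "v \<noteq> y" by blast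
    have vnK: "v \<notin> ?K" and vG0: "v \<in> carrier A" using vU by auto
    have "\<not> real (card (T.D v)) < real n / 3" using vnK vG0 Kchar[of v] by blast
    hence "real n / 3 \<le> real (card (T.D v))" by linarith
    hence "q \<le> int (card (T.D v))" using assms(8) by (simp add: ceiling_le_iff)
    hence big: "card ?U + 2 \<le> card (T.D v)" using cUq by linarith
    have US: "?U \<subseteq> carrier A" by blast
    obtain w where w: "w \<in> T.D v" and wxy: "w \<notin> {x, y}" and vwxy: "v \<otimes>\<^bsub>A\<^esub> w \<notin> {x, y}"
      and wU: "w \<notin> ?U \<or> v \<otimes>\<^bsub>A\<^esub> w \<notin> ?U"
      using T.part1[OF US vU assms(10) assms(11) vx vy big] by blast
    have wG: "w \<in> carrier A" and ne: "v \<otimes>\<^bsub>A\<^esub> w \<noteq> v \<otimes>\<^bsub>B\<^esub> w" using w by (auto simp: T.D_def)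
    have vG: "v \<in> carrier A" using vU by simp
    have vwG: "v \<otimes>\<^bsub>A\<^esub> w \<in> carrier A" using vG wG by simp
    have "(v, w) \<in> diff_set A B" using vG wG ne by (simp add: diff_set_def)
    moreover have "{v, w, v \<otimes>\<^bsub>A\<^esub> w} \<inter> {x, y} = {}" using vx vy wxy vwxy by auto
    moreover have "w \<in> ?K \<or> v \<otimes>\<^bsub>A\<^esub> w \<in> ?K" using wU wG vwG by auto
    ultimately show ?thesis using vU by blast
  next
    case False
    hence "?U \<subseteq> {x, y}" by auto
    hence "?U = {x, y}" using assms(10,11) by auto
    hence "card ?U = 2" using assms(12) by simp
    hence q4: "q = 4" using cUq by simp
    have c1: "\<lceil>real n / 3\<rceil> \<le> (4::int)" and c2: "(4::int) \<le> \<lceil>real n / 3\<rceil>"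
      using q4 assms(8) by simp_all
    have "real n / 3 \<le> of_int (4::int)" using c1 ceiling_le_iff by blast
    moreover have "of_int (4::int) - 1 < real n / 3" using c2 le_ceiling_iff by blast
    ultimately have "real n / 3 \<le> 4" and "3 < real n / 3" by simp_all
    hence n1: "10 \<le> n" and n2: "n \<le> 12" by linarith+
    have small: "card (T.D a) \<le> 3" if "a \<in> carrier A" "a \<notin> {x, y}" for a
    proof -
      have "a \<in> ?K" using that \<open>?U = {x, y}\<close> by auto
      hence "real (card (T.D a)) < real n / 3" using Kchar[of a] by blast
      hence "real (card (T.D a)) < 4" using n2 by linarith
      thus ?thesis by linarith
    qed
    have xnK: "x \<notin> ?K" and xG: "x \<in> carrier A" using assms(10) by auto
    have "\<not> real (card (T.D x)) < real n / 3" using xnK xG Kchar[of x] by blast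
    hence "real n / 3 \<le> real (card (T.D x))" by linarith
    hence bigx: "4 \<le> card (T.D x)" using n1 by linarith
    have yG: "y \<in> carrier A" using assms(11) by auto
    have n10: "10 \<le> card (carrier A)" using n1 assms(4) by simp
    have False by (rule T.part2[OF xG yG assms(12) n10 small bigx])
    thus ?thesis ..
  qed
qed

end
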